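(* For a prime $p$ let $F_{pt}:\mathbb{F}_p^2\to\mathbb{F}_p^2$ be the map $F_{pt}(x,y)=(x^3y(x-y),\;xy^3(x-y))$, where $\mathbb{F}_p=\mathbb{Z}/p\mathbb{Z}$. Then: (1) if $p=2^k+1$ for some integer $k\ge 0$, the $(k+1)$-st iterate $F_{pt}^{\circ(k+1)}$ sends every point of $\mathbb{F}_p^2$ to $(0,0)$; (2) for an arbitrary prime $p$, there exists $N\ge1$ such that $F_{pt}^{\circ N}(x,y)=(0,0)$ for every pair $(x,y)\in\mathbb{F}_p^2$ such that either $x=0$, or $y=0$, or $x\neq0$ and $y/x$ has order a power of $2$ in the group $(\mathbb{Z}/p\mathbb{Z})^*$.
   Context: $F_{pt}$ is the reduction modulo $p$ of the integer polynomial map $(x,y)\mapsto(x^3y(x-y),\,xy^3(x-y))$ (called the "power trap"); $F_{pt}^{\circ n}$ denotes its $n$-fold composition with itself. *)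

theory Defs
  imports "HOL-Number_Theory.Number_Theory"
begin

text \<open>Elements of F_p are represented by their canonical representatives 0..p-1 (as naturals).\<close>

definition F_pt :: "nat \<Rightarrow> nat \<times> nat \<Rightarrow> nat \<times> nat" where
  "F_pt p xy = (case xy of (x, y) \<Rightarrow>
     (nat ((int x ^ 3 * int y * (int x - int y)) mod int p),
      nat ((int x * int y ^ 3 * (int x - int y)) mod int p)))"

end

theory Submission
  imports Defs
begin

lemma F_fst: "p > 0 \<Longrightarrow> int (fst (F_pt p (a,b))) = (int a ^ 3 * int b * (int a - int b)) mod int p"
  by (simp add: F_pt_def)

lemma F_snd: "p > 0 \<Longrightarrow> int (snd (F_pt p (a,b))) = (int a * int b ^ 3 * (int a - int b)) mod int p"
  by (simp add: F_pt_def)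

lemma F_zero: "F_pt p (0,0) = (0,0)"
  by (simp add: F_pt_def)

lemma F_pow_zero: "(F_pt p ^^ n) (0,0) = (0,0)"
  by (induction n) (auto simp: F_zero)

lemma F_x0: "F_pt p (0,y) = (0,0)"
  by (simp add: F_pt_def)

lemma F_y0: "F_pt p (x,0) = (0,0)"
  by (simp add: F_pt_def)

lemma F_eq: "p > 0 \<Longrightarrow> [int a = int b] (mod int p) \<Longrightarrow> F_pt p (a,b) = (0,0)"
proof -
  assume p: "p > 0" and c: "[int a = int b] (mod int p)"
  have d: "[int a - int b = 0] (mod int p)" using c
    by (metis cong_diff cong_refl diff_self)
  have "[int a ^ 3 * int b * (int a - int b) = int a ^ 3 * int b * 0] (mod int p)"
    by (intro cong_mult cong_refl d)
  hence 1: "(int a ^ 3 * int b * (int a - int b)) mod int p = 0" by (simp add: cong_def)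
  have "[int a * int b ^ 3 * (int a - int b) = int a * int b ^ 3 * 0] (mod int p)"
    by (intro cong_mult cong_refl d)
  hence 2: "(int a * int b ^ 3 * (int a - int b)) mod int p = 0" by (simp add: cong_def)
  show ?thesis using 1 2 by (simp add: F_pt_def)
qed

lemma inv:
  assumes "p > 0"
  shows "\<exists>c. [int (fst ((F_pt p ^^ t)(x,y))) = c * int x^(2^t)] (mod int p) \<and>
             [int (snd ((F_pt p ^^ t)(x,y))) = c * int y^(2^t)] (mod int p)"
proof (induction t)
  case 0
  then show ?case by (auto intro!: exI[of _ 1])
next
  case (Suc t)
  then obtain c where c1: "[int (fst ((F_pt p ^^ t)(x,y))) = c * int x^(2^t)] (mod int p)"
     and c2: "[int (snd ((F_pt p ^^ t)(x,y))) = c * int y^(2^t)] (mod int p)" by blast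
  obtain a b where ab: "(F_pt p ^^ t)(x,y) = (a,b)" by fastforce
  define X where "X = int x^(2^t)"
  define Y where "Y = int y^(2^t)"
  have a: "[int a = c * X] (mod int p)" using c1 ab X_def by simp
  have b: "[int b = c * Y] (mod int p)" using c2 ab Y_def by simp
  have X2: "int x^(2^Suc t) = X^2" by (simp add: X_def power_mult[symmetric] mult.commute)
  have Y2: "int y^(2^Suc t) = Y^2" by (simp add: Y_def power_mult[symmetric] mult.commute)
  have s: "(F_pt p ^^ Suc t)(x,y) = F_pt p (a,b)" using ab by simp
  have e1: "[int a ^ 3 * int b * (int a - int b) = (c*X) ^ 3 * (c*Y) * (c*X - c*Y)] (mod int p)"
    by (intro cong_mult cong_pow cong_diff a b)
  have e2: "[int a * int b ^ 3 * (int a - int b) = (c*X) * (c*Y) ^ 3 * (c*X - c*Y)] (mod int p)"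
    by (intro cong_mult cong_pow cong_diff a b)
  have r1: "(c*X) ^ 3 * (c*Y) * (c*X - c*Y) = (c^5*X*Y*(X-Y)) * X^2"
    by (simp add: algebra_simps power2_eq_square power3_eq_cube numeral_eq_Suc)
  have r2: "(c*X) * (c*Y) ^ 3 * (c*X - c*Y) = (c^5*X*Y*(X-Y)) * Y^2"
    by (simp add: algebra_simps power2_eq_square power3_eq_cube numeral_eq_Suc)
  have f1: "[int (fst (F_pt p (a,b))) = int a ^ 3 * int b * (int a - int b)] (mod int p)"
    using F_fst[OF assms] by (simp add: cong_def)
  have f2: "[int (snd (F_pt p (a,b))) = int a * int b ^ 3 * (int a - int b)] (mod int p)"
    using F_snd[OF assms] by (simp add: cong_def)
  show ?case
    apply (rule exI[of _ "c^5*X*Y*(X-Y)"])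
    unfolding s X2 Y2
    using cong_trans[OF f1 e1] cong_trans[OF f2 e2] r1 r2 by simp
qed

lemma core:
  assumes p: "p > 0" and e: "[int x^(2^j) = int y^(2^j)] (mod int p)" and n: "n \<ge> j + 1"
  shows "(F_pt p ^^ n) (x,y) = (0,0)"
proof -
  obtain c where c1: "[int (fst ((F_pt p ^^ j)(x,y))) = c * int x^(2^j)] (mod int p)"
     and c2: "[int (snd ((F_pt p ^^ j)(x,y))) = c * int y^(2^j)] (mod int p)"
    using inv[OF p] by blast
  obtain a b where ab: "(F_pt p ^^ j)(x,y) = (a,b)" by fastforce
  have "[c * int x^(2^j) = c * int y^(2^j)] (mod int p)" by (intro cong_mult cong_refl e)
  hence "[int a = int b] (mod int p)" using c1 c2 ab
    by (metis cong_sym cong_trans fst_conv snd_conv)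
  hence z: "(F_pt p ^^ Suc j)(x,y) = (0,0)" using F_eq[OF p] ab by simp
  obtain m where m: "n = m + Suc j" using n by (metis add.commute le_Suc_ex Suc_eq_plus1)
  have "(F_pt p ^^ n) (x,y) = (F_pt p ^^ m) ((F_pt p ^^ Suc j)(x,y))"
    by (simp only: m funpow_add o_apply)
  thus ?thesis using z F_pow_zero by simp
qed

lemma zero_case:
  assumes "x = 0 \<or> y = 0" "n \<ge> 1"
  shows "(F_pt p ^^ n) (x,y) = (0,0)"
proof -
  obtain m where m: "n = Suc m" using assms(2) by (cases n) auto
  have "(F_pt p ^^ n) (x,y) = (F_pt p ^^ m) (F_pt p (x,y))" by (simp only: m funpow_Suc_right o_apply)
  thus ?thesis using assms(1) F_x0 F_y0 F_pow_zero by auto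
qed

theorem mainTheorem3:
  fixes p :: nat
  assumes "prime p"
  shows "(\<forall>k::nat. p = 2 ^ k + 1 \<longrightarrow>
            (\<forall>x<p. \<forall>y<p. (F_pt p ^^ (k + 1)) (x, y) = (0, 0)))
       \<and> (\<exists>N\<ge>1. \<forall>x<p. \<forall>y<p.
            (x = 0 \<or> y = 0 \<or>
             (x \<noteq> 0 \<and> (\<exists>r<p. [r * x = y] (mod p) \<and> (\<exists>j::nat. ord p r = 2 ^ j))))
            \<longrightarrow> (F_pt p ^^ N) (x, y) = (0, 0))"
proof (intro conjI allI impI)
  have p0: "p > 0" using assms prime_gt_0_nat by blast
  fix k x y assume pk: "p = 2 ^ k + 1" and x: "x < p" and y: "y < p"
  show "(F_pt p ^^ (k + 1)) (x, y) = (0, 0)"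
  proof (cases "x = 0 \<or> y = 0")
    case True thus ?thesis by (intro zero_case) auto
  next
    case False
    have "\<not> p dvd x" using False x by (meson dvd_imp_le not_le neq0_conv)
    hence fx: "[x ^ (2^k) = 1] (mod p)" using fermat_theorem[OF assms] pk by simp
    have "\<not> p dvd y" using False y by (meson dvd_imp_le not_le neq0_conv)
    hence fy: "[y ^ (2^k) = 1] (mod p)" using fermat_theorem[OF assms] pk by simp
    have "[x ^ (2^k) = y ^ (2^k)] (mod p)" using fx fy by (metis cong_sym cong_trans)
    hence "[int x ^ (2^k) = int y ^ (2^k)] (mod int p)"
      by (metis cong_int_iff of_nat_power)
    thus ?thesis by (rule core[OF p0]) simp
  qed
next
  have p0: "p > 0" using assms prime_gt_0_nat by blast
  have p1: "p > 1" using assms prime_gt_1_nat by blast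
  show "\<exists>N\<ge>1. \<forall>x<p. \<forall>y<p.
            (x = 0 \<or> y = 0 \<or>
             (x \<noteq> 0 \<and> (\<exists>r<p. [r * x = y] (mod p) \<and> (\<exists>j::nat. ord p r = 2 ^ j))))
            \<longrightarrow> (F_pt p ^^ N) (x, y) = (0, 0)"
  proof (intro exI[of _ p] conjI allI impI)
    show "1 \<le> p" using p0 by simp
    fix x y assume x: "x < p" and y: "y < p" and h: "x = 0 \<or> y = 0 \<or>
             (x \<noteq> 0 \<and> (\<exists>r<p. [r * x = y] (mod p) \<and> (\<exists>j::nat. ord p r = 2 ^ j)))"
    show "(F_pt p ^^ p) (x, y) = (0, 0)"
    proof (cases "x = 0 \<or> y = 0")
      case True thus ?thesis using zero_case p0 by simp
    next
      case False
      then obtain r j where r: "[r * x = y] (mod p)" and o: "ord p r = 2 ^ j" using h by blast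
      have ro: "[r ^ (2^j) = 1] (mod p)" using ord[of r p] o by simp
      have "\<not> p dvd r"
      proof
        assume "p dvd r"
        hence "p dvd r * x" by simp
        hence "p dvd y" using r by (metis cong_dvd_iff)
        thus False using False y by (meson dvd_imp_le not_le neq0_conv)
      qed
      hence fr: "[r ^ (p - 1) = 1] (mod p)" using fermat_theorem[OF assms] by simp
      hence "ord p r dvd p - 1" using ord_divides by blast
      hence "2^j \<le> p - 1" using o p1 by (metis dvd_imp_le zero_less_diff)
      moreover have "j < 2^j" by (rule less_exp)
      ultimately have jp: "j + 1 \<le> p" by linarith
      have "[(r*x) ^ (2^j) = y ^ (2^j)] (mod p)" using r by (rule cong_pow)
      moreover have "[(r*x) ^ (2^j) = x ^ (2^j)] (mod p)"
        using cong_mult[OF ro cong_refl[of "x^(2^j)"]] by (simp add: power_mult_distrib)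
      ultimately have "[x ^ (2^j) = y ^ (2^j)] (mod p)" by (metis cong_sym cong_trans)
      hence "[int x ^ (2^j) = int y ^ (2^j)] (mod int p)"
        by (metis cong_int_iff of_nat_power)
      thus ?thesis using core[OF p0 _ jp] by simp
    qed
  qed
qed

end
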